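(* Suppose the bounded functions $r$ and $c$ are $L_r$- and $L_c$-Lipschitz continuous, respectively, and that $f(x,u,d)$ is $L_f$-Lipschitz continuous in $x$ for all $u\in\mathcal{U}$, $d\in\mathcal{D}$. Let $L=\max(L_r,L_c)$ and $\gamma\in[0,1)$. If $L_f\gamma<1$, then the value function $V$ defined in the context is $L$-Lipschitz continuous.
   Context: Setting: States $x\in\mathbb{R}^n$; compact sets $\mathcal{U}\subseteq\mathbb{R}^m$ (controls) and $\mathcal{D}\subseteq\mathbb{R}^\ell$ (disturbances); dynamics $f:\mathbb{R}^n\times\mathcal{U}\times\mathcal{D}\to\mathbb{R}^n$. For sequences $\mathbf{u}=\{u_t\}_{t\ge0}\subset\mathcal{U}$, $\mathbf{d}=\{d_t\}_{t\ge0}\subset\mathcal{D}$, the trajectory is $\xi_x^{\mathbf{u},\mathbf{d}}(0)=x$, $\xi_x^{\mathbf{u},\mathbf{d}}(t+1)=f(\xi_x^{\mathbf{u},\mathbf{d}}(t),u_t,d_t)$ for $t\in\mathbb{Z}_+$. $r,c:\mathbb{R}^n\to\mathbb{R}$ are bounded. A map $\phi$ from control sequences to disturbance sequences is a non-anticipative strategy if whenever $u_t=\bar u_t$ for all $t\in\{0,\dots,T\}$, then $\phi(\mathbf{u})_t=\phi(\bar{\mathbf{u}})_t$ for all $t\in\{0,\dots,T\}$; $\Phi$ is the set of all such strategies. Value function: $$V(x)=\inf_{\phi\in\Phi}\ \sup_{\mathbf{u}}\ \sup_{t\in\mathbb{Z}_+}\ \min\Big\{\gamma^t r\big(\xi_x^{\mathbf{u},\phi(\mathbf{u})}(t)\big),\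 \min_{\tau=0,\dots,t}\gamma^\tau c\big(\xi_x^{\mathbf{u},\phi(\mathbf{u})}(\tau)\big)\Big\}$$ (the paper writes $\max_{\mathbf{u}}$ over control sequences). *)

theory Defs
  imports "HOL-Analysis.Analysis"
begin

primrec traj :: "('x \<Rightarrow> 'u \<Rightarrow> 'd \<Rightarrow> 'x) \<Rightarrow> 'x \<Rightarrow> (nat \<Rightarrow> 'u) \<Rightarrow> (nat \<Rightarrow> 'd) \<Rightarrow> nat \<Rightarrow> 'x"
  where
    "traj f x u d 0 = x"
  | "traj f x u d (Suc t) = f (traj f x u d t) (u t) (d t)"

definition seqs :: "'a set \<Rightarrow> (nat \<Rightarrow> 'a) set" where
  "seqs A = {s. \<forall>t. s t \<in> A}"

definition nonanticipative :: "'u set \<Rightarrow> 'd set \<Rightarrow> ((nat \<Rightarrow> 'u) \<Rightarrow> (nat \<Rightarrow> 'd)) set" where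
  "nonanticipative U D =
     {\<phi>. (\<forall>u\<in>seqs U. \<phi> u \<in> seqs D) \<and>
          (\<forall>u\<in>seqs U. \<forall>u'\<in>seqs U. \<forall>T::nat.
              (\<forall>t\<le>T. u t = u' t) \<longrightarrow> (\<forall>t\<le>T. \<phi> u t = \<phi> u' t))}"

definition value_fun ::
  "('x \<Rightarrow> 'u \<Rightarrow> 'd \<Rightarrow> 'x) \<Rightarrow> 'u set \<Rightarrow> 'd set \<Rightarrow> ('x \<Rightarrow> real) \<Rightarrow> ('x \<Rightarrow> real) \<Rightarrow> real \<Rightarrow> 'x \<Rightarrow> real"
  where
  "value_fun f U D r c \<gamma> x =
     (INF \<phi>\<in>nonanticipative U D. SUP u\<in>seqs U. SUP t\<in>(UNIV::nat set).
        min (\<gamma> ^ t * r (traj f x u (\<phi> u) t))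
            (MIN \<tau>\<in>{0..t}. \<gamma> ^ \<tau> * c (traj f x u (\<phi> u) \<tau>)))"

end

theory Submission
  imports Defs
begin

lemma sup_diff_le:
  fixes f g :: "'a \<Rightarrow> real"
  assumes "bdd_above (f`A)" "bdd_above (g`A)" "\<forall>a\<in>A. \<bar>f a - g a\<bar> \<le> K" "0 \<le> K"
  shows "\<bar>(SUP a\<in>A. f a) - (SUP a\<in>A. g a)\<bar> \<le> K"
proof (cases "A = {}")
  case True then show ?thesis using assms by simp
next
  case False
  have 1: "(SUP a\<in>A. f a) \<le> (SUP a\<in>A. g a) + K"
  proof (rule cSUP_least[OF False])
    fix a assume "a \<in> A"
    then have "f a \<le> g a + K" using assms(3) by force
    also have "g a \<le> (SUP a\<in>A. g a)" using cSUP_upper[OF \<open>a\<in>A\<close> assms(2)] .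
    finally show "f a \<le> (SUP a\<in>A. g a) + K" by simp
  qed
  have 2: "(SUP a\<in>A. g a) \<le> (SUP a\<in>A. f a) + K"
  proof (rule cSUP_least[OF False])
    fix a assume "a \<in> A"
    then have "g a \<le> f a + K" using assms(3) by force
    also have "f a \<le> (SUP a\<in>A. f a)" using cSUP_upper[OF \<open>a\<in>A\<close> assms(1)] .
    finally show "g a \<le> (SUP a\<in>A. f a) + K" by simp
  qed
  from 1 2 show ?thesis by linarith
qed

lemma inf_diff_le:
  fixes f g :: "'a \<Rightarrow> real"
  assumes "bdd_below (f`A)" "bdd_below (g`A)" "\<forall>a\<in>A. \<bar>f a - g a\<bar> \<le> K" "0 \<le> K"
  shows "\<bar>(INF a\<in>A. f a) - (INF a\<in>A. g a)\<bar> \<le> K"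
proof (cases "A = {}")
  case True then show ?thesis using assms by simp
next
  case False
  have 1: "(INF a\<in>A. f a) - K \<le> (INF a\<in>A. g a)"
  proof -
    have "(INF a\<in>A. f a) \<le> (INF a\<in>A. g a) + K"
    proof -
      have "(INF a\<in>A. f a) - K \<le> (INF a\<in>A. g a)"
      proof (rule cINF_greatest[OF False])
        fix a assume "a \<in> A"
        have "(INF a\<in>A. f a) \<le> f a" using cINF_lower[OF assms(1) \<open>a\<in>A\<close>] .
        also have "f a \<le> g a + K" using assms(3) \<open>a\<in>A\<close> by force
        finally show "(INF a\<in>A. f a) - K \<le> g a" by simp
      qed
      then show ?thesis by simp
    qed
    then show ?thesis by simp
  qed
  have 2: "(INF a\<in>A. g a) - K \<le> (INF a\<in>A. f a)"
  proof (rule cINF_greatest[OF False])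
    fix a assume "a \<in> A"
    have "(INF a\<in>A. g a) \<le> g a" using cINF_lower[OF assms(2) \<open>a\<in>A\<close>] .
    also have "g a \<le> f a + K" using assms(3) \<open>a\<in>A\<close> by force
    finally show "(INF a\<in>A. g a) - K \<le> f a" by simp
  qed
  from 1 2 show ?thesis by linarith
qed

lemma min_diff_le:
  fixes f g :: "'a \<Rightarrow> real"
  assumes "finite A" "A \<noteq> {}" "\<forall>a\<in>A. \<bar>f a - g a\<bar> \<le> K"
  shows "\<bar>(MIN a\<in>A. f a) - (MIN a\<in>A. g a)\<bar> \<le> K"
proof -
  have "(MIN a\<in>A. g a) \<in> g ` A" using assms by (intro Min_in) auto
  then obtain a where a: "a \<in> A" "(MIN a\<in>A. g a) = g a" by auto
  have "(MIN a\<in>A. f a) \<in> f ` A" using assms by (intro Min_in) auto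
  then obtain b where b: "b \<in> A" "(MIN a\<in>A. f a) = f b" by auto
  have "(MIN a\<in>A. f a) \<le> f a" using a assms by simp
  moreover have "(MIN a\<in>A. g a) \<le> g b" using b assms by simp
  moreover have "\<bar>f a - g a\<bar> \<le> K" "\<bar>f b - g b\<bar> \<le> K" using assms a b by auto
  ultimately show ?thesis using a b by linarith
qed

lemma sup_abs_le:
  fixes f :: "'a \<Rightarrow> real"
  assumes "A \<noteq> {}" "\<forall>a\<in>A. \<bar>f a\<bar> \<le> B"
  shows "\<bar>(SUP a\<in>A. f a)\<bar> \<le> B"
proof -
  have bd: "bdd_above (f ` A)" using assms by (intro bdd_aboveI2[where M=B]) force
  obtain a where "a \<in> A" using assms by auto
  have "f a \<le> (SUP a\<in>A. f a)" using cSUP_upper[OF \<open>a\<in>A\<close> bd] .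
  moreover have "(SUP a\<in>A. f a) \<le> B" using assms by (intro cSUP_least) force+
  moreover have "\<bar>f a\<bar> \<le> B" using assms \<open>a\<in>A\<close> by auto
  ultimately show ?thesis by linarith
qed

lemma traj_dist:
  assumes "\<forall>t. u t \<in> U" "\<forall>t. d t \<in> D"
    and "\<forall>u\<in>U. \<forall>d\<in>D. L-lipschitz_on UNIV (\<lambda>x. f x u d)"
  shows "dist (traj f x u d t) (traj f y u d t) \<le> L ^ t * dist x y"
proof (induction t)
  case 0 then show ?case by simp
next
  case (Suc t)
  have L: "L-lipschitz_on UNIV (\<lambda>x. f x (u t) (d t))" using assms by auto
  then have "0 \<le> L" using lipschitz_on_nonneg by blast
  have "dist (traj f x u d (Suc t)) (traj f y u d (Suc t))
      \<le> L * dist (traj f x u d t) (traj f y u d t)"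
    using lipschitz_onD[OF L] by simp
  also have "\<dots> \<le> L * (L ^ t * dist x y)" using Suc \<open>0 \<le> L\<close> by (intro mult_left_mono) auto
  finally show ?case by simp
qed

theorem theorem3:
  fixes f :: "'n::euclidean_space \<Rightarrow> 'm::euclidean_space \<Rightarrow> 'l::euclidean_space \<Rightarrow> 'n"
    and U :: "'m set" and D :: "'l set"
    and r c :: "'n \<Rightarrow> real"
    and L_r L_c L_f \<gamma> :: real
  assumes "compact U" and "compact D"
    and "bounded (range r)" and "bounded (range c)"
    and "L_r-lipschitz_on UNIV r" and "L_c-lipschitz_on UNIV c"
    and "\<forall>u\<in>U. \<forall>d\<in>D. L_f-lipschitz_on UNIV (\<lambda>x. f x u d)"
    and "0 \<le> \<gamma>" and "\<gamma> < 1"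
    and "L_f * \<gamma> < 1"
  shows "(max L_r L_c)-lipschitz_on UNIV (value_fun f U D r c \<gamma>)"
proof -
  note lip = assms(7)
  have Lr0: "0 \<le> L_r" using assms(5) lipschitz_on_nonneg by blast
  have Lc0: "0 \<le> L_c" using assms(6) lipschitz_on_nonneg by blast
  obtain Br where Br: "\<forall>x. \<bar>r x\<bar> \<le> Br" using assms(3) unfolding bounded_iff by auto
  obtain Bc where Bc: "\<forall>x. \<bar>c x\<bar> \<le> Bc" using assms(4) unfolding bounded_iff by auto
  define B where "B = max 0 (max Br Bc)"
  have rB: "\<bar>r x\<bar> \<le> B" and cB: "\<bar>c x\<bar> \<le> B" for x using Br Bc unfolding B_def
    by (meson max.coboundedI2 max.cobounded1 max.cobounded2 order_trans)+
  have B0: "0 \<le> B" unfolding B_def by simp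
  have gpow: "0 \<le> \<gamma>^t" "\<gamma>^t \<le> 1" for t :: nat using assms(8,9)
    by (auto intro: power_le_one)
  have gB: "\<bar>\<gamma>^t * h\<bar> \<le> B" if "\<bar>h\<bar> \<le> B" for h t
  proof -
    have "\<bar>\<gamma>^t * h\<bar> = \<gamma>^t * \<bar>h\<bar>" using gpow(1) by (simp add: abs_mult)
    also have "\<dots> \<le> 1 * B" using gpow that B0 by (intro mult_mono) auto
    finally show ?thesis by simp
  qed
  define G where "G = (\<lambda>z \<phi> u t. min (\<gamma> ^ t * r (traj f z u (\<phi> u) t))
            (MIN \<tau>\<in>{0..t}. \<gamma> ^ \<tau> * c (traj f z u (\<phi> u) \<tau>)))"
  define S1 where "S1 = (\<lambda>z \<phi> u. SUP t\<in>(UNIV::nat set). G z \<phi> u t)"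
  define S2 where "S2 = (\<lambda>z \<phi>. SUP u\<in>seqs U. S1 z \<phi> u)"
  define B2 where "B2 = max B \<bar>Sup ({}::real set)\<bar>"
  have V: "value_fun f U D r c \<gamma> z = (INF \<phi>\<in>nonanticipative U D. S2 z \<phi>)" for z
    unfolding value_fun_def S2_def S1_def G_def by simp
  have GB: "\<bar>G z \<phi> u t\<bar> \<le> B" for z \<phi> u t
  proof -
    have "\<bar>(MIN \<tau>\<in>{0..t}. \<gamma> ^ \<tau> * c (traj f z u (\<phi> u) \<tau>))\<bar> \<le> B"
    proof -
      have "(MIN \<tau>\<in>{0..t}. \<gamma> ^ \<tau> * c (traj f z u (\<phi> u) \<tau>)) \<in> (\<lambda>\<tau>. \<gamma> ^ \<tau> * c (traj f z u (\<phi> u) \<tau>)) ` {0..t}"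
        by (intro Min_in) auto
      then obtain s where "(MIN \<tau>\<in>{0..t}. \<gamma> ^ \<tau> * c (traj f z u (\<phi> u) \<tau>)) = \<gamma> ^ s * c (traj f z u (\<phi> u) s)" by blast
      then show ?thesis using gB[OF cB] by metis
    qed
    moreover have "\<bar>\<gamma> ^ t * r (traj f z u (\<phi> u) t)\<bar> \<le> B" using gB[OF rB] .
    ultimately show ?thesis unfolding G_def by linarith
  qed
  have S1B: "\<bar>S1 z \<phi> u\<bar> \<le> B" for z \<phi> u
    unfolding S1_def using GB by (intro sup_abs_le) auto
  have S2B: "\<bar>S2 z \<phi>\<bar> \<le> B2" for z \<phi>
  proof (cases "seqs U = {}")
    case True then show ?thesis unfolding S2_def B2_def by simp
  next
    case False
    have "\<bar>S2 z \<phi>\<bar> \<le> B" unfolding S2_def using S1B False by (intro sup_abs_le) auto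
    then show ?thesis unfolding B2_def by simp
  qed
  show ?thesis
  proof (rule lipschitz_onI)
    show "0 \<le> max L_r L_c" using Lr0 by simp
    fix x y :: 'n
    define K where "K = max L_r L_c * dist x y"
    have K0: "0 \<le> K" unfolding K_def using Lr0 by simp
    have key: "\<gamma>^t * \<bar>h (traj f x u d t) - h (traj f y u d t)\<bar> \<le> K"
      if u: "\<forall>t. u t \<in> U" and d: "\<forall>t. d t \<in> D" and h: "Lh-lipschitz_on UNIV h"
        and Lh: "Lh \<le> max L_r L_c" for u d t and h :: "'n \<Rightarrow> real" and Lh
    proof -
      have Lh0: "0 \<le> Lh" using h lipschitz_on_nonneg by blast
      have Lf0: "0 \<le> L_f"
      proof (cases "U = {} \<or> D = {}")
        case True then show ?thesis using u d by auto
      next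
        case False then obtain a b where "a \<in> U" "b \<in> D" by auto
        then show ?thesis using lip lipschitz_on_nonneg by blast
      qed
      have "\<bar>h (traj f x u d t) - h (traj f y u d t)\<bar> \<le> Lh * dist (traj f x u d t) (traj f y u d t)"
        using lipschitz_onD[OF h] by (simp add: dist_real_def)
      also have "\<dots> \<le> Lh * (L_f ^ t * dist x y)"
        using traj_dist[OF u d lip] Lh0 by (intro mult_left_mono) auto
      finally have "\<gamma>^t * \<bar>h (traj f x u d t) - h (traj f y u d t)\<bar> \<le> \<gamma>^t * (Lh * (L_f ^ t * dist x y))"
        using gpow(1) by (intro mult_left_mono) auto
      also have "\<dots> = (L_f * \<gamma>)^t * (Lh * dist x y)" by (simp add: power_mult_distrib)
      also have "\<dots> \<le> 1 * (Lh * dist x y)"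
        using assms(8,10) Lf0 Lh0 by (intro mult_right_mono power_le_one) auto
      also have "\<dots> \<le> K" unfolding K_def using Lh by (simp add: mult_right_mono)
      finally show ?thesis .
    qed
    have GK: "\<bar>G x \<phi> u t - G y \<phi> u t\<bar> \<le> K" if "\<phi> \<in> nonanticipative U D" "u \<in> seqs U" for \<phi> u t
    proof -
      have u: "\<forall>t. u t \<in> U" using that(2) unfolding seqs_def by auto
      have d: "\<forall>t. \<phi> u t \<in> D" using that unfolding nonanticipative_def seqs_def by auto
      have k1: "\<bar>\<gamma>^s * h (traj f x u (\<phi> u) s) - \<gamma>^s * h (traj f y u (\<phi> u) s)\<bar> \<le> K"
        if "Lh-lipschitz_on UNIV h" "Lh \<le> max L_r L_c" for s h Lh
      proof -
        have "\<bar>\<gamma>^s * h (traj f x u (\<phi> u) s) - \<gamma>^s * h (traj f y u (\<phi> u) s)\<bar>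
            = \<gamma>^s * \<bar>h (traj f x u (\<phi> u) s) - h (traj f y u (\<phi> u) s)\<bar>"
          using gpow(1)[of s] by (simp add: abs_mult right_diff_distrib[symmetric])
        also have "\<dots> \<le> K" using key[OF u d that] .
        finally show ?thesis .
      qed
      have a: "\<bar>\<gamma>^t * r (traj f x u (\<phi> u) t) - \<gamma>^t * r (traj f y u (\<phi> u) t)\<bar> \<le> K"
        using k1[OF assms(5)] by simp
      have b: "\<bar>(MIN \<tau>\<in>{0..t}. \<gamma> ^ \<tau> * c (traj f x u (\<phi> u) \<tau>)) - (MIN \<tau>\<in>{0..t}. \<gamma> ^ \<tau> * c (traj f y u (\<phi> u) \<tau>))\<bar> \<le> K"
        using k1[OF assms(6)] by (intro min_diff_le) auto
      show ?thesis unfolding G_def using a b by linarith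
    qed
    have S1K: "\<bar>S1 x \<phi> u - S1 y \<phi> u\<bar> \<le> K" if "\<phi> \<in> nonanticipative U D" "u \<in> seqs U" for \<phi> u
      unfolding S1_def
    proof (rule sup_diff_le)
      show "bdd_above (range (G x \<phi> u))" using GB by (intro bdd_aboveI2[where M=B]) (meson abs_le_D1)
      show "bdd_above (range (G y \<phi> u))" using GB by (intro bdd_aboveI2[where M=B]) (meson abs_le_D1)
    qed (use GK that K0 in auto)
    have S2K: "\<bar>S2 x \<phi> - S2 y \<phi>\<bar> \<le> K" if "\<phi> \<in> nonanticipative U D" for \<phi>
      unfolding S2_def
    proof (rule sup_diff_le)
      show "bdd_above ((S1 x \<phi>) ` seqs U)" using S1B by (intro bdd_aboveI2[where M=B]) (meson abs_le_D1)
      show "bdd_above ((S1 y \<phi>) ` seqs U)" using S1B by (intro bdd_aboveI2[where M=B]) (meson abs_le_D1)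
    qed (use S1K that K0 in auto)
    have "\<bar>value_fun f U D r c \<gamma> x - value_fun f U D r c \<gamma> y\<bar> \<le> K"
      unfolding V
    proof (rule inf_diff_le)
      show "bdd_below ((S2 x) ` nonanticipative U D)" using S2B
        by (intro bdd_belowI2[where m="-B2"]) (meson abs_le_D2 minus_le_iff)
      show "bdd_below ((S2 y) ` nonanticipative U D)" using S2B
        by (intro bdd_belowI2[where m="-B2"]) (meson abs_le_D2 minus_le_iff)
    qed (use S2K K0 in auto)
    then show "dist (value_fun f U D r c \<gamma> x) (value_fun f U D r c \<gamma> y) \<le> max L_r L_c * dist x y"
      unfolding K_def by (simp add: dist_real_def)
  qed
qed

end
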